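(* Fix a set of mean-field flows $\mathcal{S}=\{\mu^1,\dots,\mu^K\}$ and let $\pi^a,\pi^b\in\mathcal{B}^{\mathrm{RQE}}_{\mathrm{opt}}(\mathcal{S})$. Suppose there is $t\in\{0,\dots,T-1\}$ such that $Q^{\pi^a}_{\mu^k,t}(x,u)=Q^{\pi^b}_{\mu^k,t}(x,u)$ for all $x\in\mathcal{X}$, $u\in\mathcal{U}$, $k\in\{1,\dots,K\}$. Then (i) $\pi^a_t(\cdot\mid x)=\pi^b_t(\cdot\mid x)$ for all $x\in\mathcal{X}$, and (ii) if $t\ge1$, $Q^{\pi^a}_{\mu^k,t-1}(x,u)=Q^{\pi^b}_{\mu^k,t-1}(x,u)$ for all $x,u,k$.
   Context: Let $\mathcal{X},\mathcal{U}$ be finite nonempty sets and $T\ge1$. $\mathcal{P}(E)$ denotes probability vectors on a finite set $E$. For $t\in\{0,\dots,T-1\}$: transition kernels $f_t(x'\mid x,u,\mu)$ (a distribution over $x'$ for each $x,u$ and $\mu\in\mathcal{P}(\mathcal{X})$) and bounded rewards $r_t(x,u,\mu)$. A policy is $\pi=(\pi_0,\dots,\pi_{T-1})$ with $\pi_t(\cdot\mid x)\in\mathcal{P}(\mathcal{U})$; $\Pi_t$ the set of time-$t$ decision rules. A mean-field flow is a sequence $\mu=(\mu_0,\dots,\mu_T)$ in $\mathcal{P}(\mathcal{X})$. Q-functions: $Q^\pi_{\mu,T-1}(x,u)=r_{T-1}(x,u,\mu_{T-1})$, $Q^\pi_{\mu,t}(x,u)=r_t(x,u,\mu_t)+\sum_{x'}f_t(x'\mid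 x,u,\mu_t)V^\pi_{\mu,t+1}(x')$ for $t<T-1$, with $V^\pi_{\mu,t}(x)=\sum_u\pi_t(u\mid x)Q^\pi_{\mu,t}(x,u)$. Data: finite $\mathbb{M}=\{\mu_0^1,\dots,\mu_0^K\}\subset\mathcal{P}(\mathcal{X})$ with probabilities $w_k=\Gamma^*(\mu_0^k)$; $\tau>0$; $\alpha>0$; a strictly convex regularizer $\nu:\mathcal{P}(\mathcal{U})\to\mathbb{R}$. A set of flows $\mathcal{S}=\{\mu^1,\dots,\mu^K\}$ has $\mu^k$ starting at $\mu_0^k$. Cost: $c_t^{\pi,\alpha}(x;\mathcal{S})=\frac1\tau\log\big(\sum_kw_k\exp(-\tau\sum_u\pi_t(u\mid x)Q^\pi_{\mu^k,t}(x,u))\big)+\alpha\nu(\pi_t(\cdot\mid x))$. $(\pi'_t,\pi_{-t})$ denotes $\pi$ with time-$t$ component replaced by $\pi'_t\in\Pi_t$. $\mathcal{B}^{\mathrm{RQE}}_{\mathrm{opt}}(\mathcal{S})$ is the set of policies $\pi$ such that for all $t,x$, $\pi_t(\cdot\mid x)$ minimizes $c_t^{(\pi'_t,\pi_{-t}),\alpha}(x;\mathcal{S})$ over $\pi'_t\in\Pi_t$. *)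

theory Defs
  imports "HOL-Analysis.Analysis"
begin

definition prob_vec :: "('a::finite \<Rightarrow> real) \<Rightarrow> bool" where
  "prob_vec p \<longleftrightarrow> (\<forall>a. 0 \<le> p a) \<and> (\<Sum>a\<in>UNIV. p a) = 1"

definition decision_rule :: "('x::finite \<Rightarrow> 'u::finite \<Rightarrow> real) \<Rightarrow> bool" where
  "decision_rule d \<longleftrightarrow> (\<forall>x. prob_vec (d x))"

text \<open>A policy pol = (pi_0,...,pi_(T-1)); pol t x u is pi_t(u | x).\<close>
definition policy :: "nat \<Rightarrow> (nat \<Rightarrow> 'x::finite \<Rightarrow> 'u::finite \<Rightarrow> real) \<Rightarrow> bool" where
  "policy T pol \<longleftrightarrow> (\<forall>t<T. decision_rule (pol t))"

text \<open>Kernel: f t x u m x' = f_t(x' | x,u,m);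
  reward r t x u m = r_t(x,u,m); flow mu t = mu_t.  For t >= T-1 it is the terminal
  reward (only t <= T-1 is meaningful).  V^pi_{mu,t+1} is inlined.\<close>
function Qfun :: "nat \<Rightarrow> (nat \<Rightarrow> 'x::finite \<Rightarrow> 'u::finite \<Rightarrow> ('x \<Rightarrow> real) \<Rightarrow> 'x \<Rightarrow> real)
    \<Rightarrow> (nat \<Rightarrow> 'x \<Rightarrow> 'u \<Rightarrow> ('x \<Rightarrow> real) \<Rightarrow> real)
    \<Rightarrow> (nat \<Rightarrow> 'x \<Rightarrow> 'u \<Rightarrow> real) \<Rightarrow> (nat \<Rightarrow> 'x \<Rightarrow> real) \<Rightarrow> nat \<Rightarrow> 'x \<Rightarrow> 'u \<Rightarrow> real" where
  "Qfun T f r pol mu t x u =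
     (if T \<le> t + 1 then r t x u (mu t)
      else r t x u (mu t) +
        (\<Sum>x'\<in>UNIV. f t x u (mu t) x' *
           (\<Sum>u'\<in>UNIV. pol (t+1) x' u' * Qfun T f r pol mu (t+1) x' u')))"
  by pat_completeness auto
termination
  by (relation "Wellfounded.measure (\<lambda>(T,f,r,pol,mu,t,x,u). T - t)") auto

declare Qfun.simps [simp del]

definition Vfun where
  "Vfun T f r pol mu t x = (\<Sum>u\<in>UNIV. pol t x u * Qfun T f r pol mu t x u)"

definition cost ::
  "nat \<Rightarrow> (nat \<Rightarrow> 'x::finite \<Rightarrow> 'u::finite \<Rightarrow> ('x \<Rightarrow> real) \<Rightarrow> 'x \<Rightarrow> real)
    \<Rightarrow> (nat \<Rightarrow> 'x \<Rightarrow> 'u \<Rightarrow> ('x \<Rightarrow> real) \<Rightarrow> real)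
    \<Rightarrow> nat \<Rightarrow> (nat \<Rightarrow> real) \<Rightarrow> (nat \<Rightarrow> nat \<Rightarrow> 'x \<Rightarrow> real) \<Rightarrow> real \<Rightarrow> real
    \<Rightarrow> (('u \<Rightarrow> real) \<Rightarrow> real)
    \<Rightarrow> (nat \<Rightarrow> 'x \<Rightarrow> 'u \<Rightarrow> real) \<Rightarrow> nat \<Rightarrow> 'x \<Rightarrow> real" where
  "cost T f r K w mus tau alpha nu pol t x =
     (1 / tau) * ln (\<Sum>k\<in>{1..K}. w k *
        exp (- tau * (\<Sum>u\<in>UNIV. pol t x u * Qfun T f r pol (mus k) t x u)))
     + alpha * nu (pol t x)"

definition B_opt ::
  "nat \<Rightarrow> (nat \<Rightarrow> 'x::finite \<Rightarrow> 'u::finite \<Rightarrow> ('x \<Rightarrow> real) \<Rightarrow> 'x \<Rightarrow> real)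
    \<Rightarrow> (nat \<Rightarrow> 'x \<Rightarrow> 'u \<Rightarrow> ('x \<Rightarrow> real) \<Rightarrow> real)
    \<Rightarrow> nat \<Rightarrow> (nat \<Rightarrow> real) \<Rightarrow> (nat \<Rightarrow> nat \<Rightarrow> 'x \<Rightarrow> real) \<Rightarrow> real \<Rightarrow> real
    \<Rightarrow> (('u \<Rightarrow> real) \<Rightarrow> real) \<Rightarrow> (nat \<Rightarrow> 'x \<Rightarrow> 'u \<Rightarrow> real) set" where
  "B_opt T f r K w mus tau alpha nu =
     {pol. policy T pol \<and>
       (\<forall>t<T. \<forall>x. \<forall>d. decision_rule d \<longrightarrow>
          cost T f r K w mus tau alpha nu pol t x
            \<le> cost T f r K w mus tau alpha nu (pol(t := d)) t x)}"

definition strictly_convex_on_simplex :: "(('u::finite \<Rightarrow> real) \<Rightarrow> real) \<Rightarrow> bool" where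
  "strictly_convex_on_simplex nu \<longleftrightarrow>
     (\<forall>p q \<theta>. prob_vec p \<longrightarrow> prob_vec q \<longrightarrow> p \<noteq> q \<longrightarrow> 0 < \<theta> \<longrightarrow> \<theta> < 1 \<longrightarrow>
        nu (\<lambda>u. \<theta> * p u + (1 - \<theta>) * q u) < \<theta> * nu p + (1 - \<theta>) * nu q)"

end

theory Submission
  imports Defs
begin

lemma Qfun_cong:
  "(\<And>s. s > t \<Longrightarrow> pol s = pol' s) \<Longrightarrow> Qfun T f r pol mu t x u = Qfun T f r pol' mu t x u"
proof (induction T f r pol mu t x u rule: Qfun.induct)
  case (1 T f r pol mu t x u)
  show ?case
  proof (cases "T \<le> t + 1")
    case True then show ?thesis by (simp add: Qfun.simps)
  next
    case False
    have IH: "\<And>x' u'. Qfun T f r pol mu (Suc t) x' u' = Qfun T f r pol' mu (Suc t) x' u'"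
      using 1 False by simp
    have P: "pol (Suc t) = pol' (Suc t)" using 1(2) by simp
    show ?thesis using False
      by (subst (1 2) Qfun.simps) (simp add: IH P)
  qed
qed

lemma lse_mid:
  fixes w a b :: "nat \<Rightarrow> real"
  assumes fin: "finite I" and wn: "\<And>k. k \<in> I \<Longrightarrow> 0 \<le> w k" and pos: "0 < (\<Sum>k\<in>I. w k)"
  shows "ln (\<Sum>k\<in>I. w k * exp ((a k + b k)/2)) \<le> (ln (\<Sum>k\<in>I. w k * exp (a k)) + ln (\<Sum>k\<in>I. w k * exp (b k)))/2"
proof -
  have "\<exists>i\<in>I. 0 < w i"
  proof (rule ccontr)
    assume "\<not> (\<exists>i\<in>I. 0 < w i)"
    then have "\<And>i. i \<in> I \<Longrightarrow> w i \<le> 0" by (auto simp: not_less)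
    then have "sum w I \<le> 0" by (rule sum_nonpos)
    with pos show False by simp
  qed
  then obtain i where i: "i \<in> I" "0 < w i" by blast
  have posf: "\<And>c. 0 < (\<Sum>k\<in>I. w k * exp (c k))"
    by (rule sum_pos2[OF fin i(1)]) (use i wn in auto)
  define S where "S = (\<Sum>k\<in>I. w k * exp ((a k + b k)/2))"
  define A where "A = (\<Sum>k\<in>I. w k * exp (a k))"
  define B where "B = (\<Sum>k\<in>I. w k * exp (b k))"
  have S0: "0 < S" "0 < A" "0 < B" unfolding S_def A_def B_def by (rule posf)+
  have "S\<^sup>2 \<le> A * B"
  proof -
    have "S = (\<Sum>k\<in>I. (sqrt (w k) * exp (a k / 2)) * (sqrt (w k) * exp (b k / 2)))"
      unfolding S_def
    proof (rule sum.cong)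
      fix k assume "k \<in> I"
      then have "sqrt (w k) * sqrt (w k) = w k" using wn by simp
      moreover have "exp ((a k + b k)/2) = exp (a k / 2) * exp (b k / 2)"
        by (simp add: add_divide_distrib exp_add)
      ultimately show "w k * exp ((a k + b k)/2) = (sqrt (w k) * exp (a k / 2)) * (sqrt (w k) * exp (b k / 2))"
        by (simp add: algebra_simps)
    qed simp
    moreover have "A = (\<Sum>k\<in>I. (sqrt (w k) * exp (a k / 2))\<^sup>2)"
      unfolding A_def
    proof (rule sum.cong)
      fix k assume "k \<in> I"
      then have "(sqrt (w k))\<^sup>2 = w k" using wn by simp
      moreover have "(exp (a k / 2))\<^sup>2 = exp (a k)"
        by (simp add: power2_eq_square flip: exp_add)
      ultimately show "w k * exp (a k) = (sqrt (w k) * exp (a k / 2))\<^sup>2"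
        by (simp add: power_mult_distrib)
    qed simp
    moreover have "B = (\<Sum>k\<in>I. (sqrt (w k) * exp (b k / 2))\<^sup>2)"
      unfolding B_def
    proof (rule sum.cong)
      fix k assume "k \<in> I"
      then have "(sqrt (w k))\<^sup>2 = w k" using wn by simp
      moreover have "(exp (b k / 2))\<^sup>2 = exp (b k)"
        by (simp add: power2_eq_square flip: exp_add)
      ultimately show "w k * exp (b k) = (sqrt (w k) * exp (b k / 2))\<^sup>2"
        by (simp add: power_mult_distrib)
    qed simp
    ultimately show ?thesis using Cauchy_Schwarz_ineq_sum by metis
  qed
  then have "ln (S\<^sup>2) \<le> ln (A * B)" using S0 by simp
  then have "2 * ln S \<le> ln A + ln B" using S0 by (simp add: ln_mult power2_eq_square)
  then show ?thesis unfolding S_def A_def B_def by simp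
qed

lemma lemma1_core:
  fixes Q :: "nat \<Rightarrow> 'x::finite \<Rightarrow> 'u::finite \<Rightarrow> real" and nu :: "('u \<Rightarrow> real) \<Rightarrow> real"
  assumes fin: "finite I" and wn: "\<And>k. k \<in> I \<Longrightarrow> 0 \<le> w k" and pos: "0 < (\<Sum>k\<in>I. w k)"
    and tau_pos: "0 < (tau::real)" and alpha_pos: "0 < (alpha::real)"
    and nu_sc: "strictly_convex_on_simplex nu"
    and G_def: "\<And>p. G p = (1 / tau) * ln (\<Sum>k\<in>I. w k *
        exp (- tau * (\<Sum>u\<in>UNIV. p u * Q k x u))) + alpha * nu p"
    and p: "prob_vec p" and q: "prob_vec q"
    and pmin: "\<And>d. prob_vec d \<Longrightarrow> G p \<le> G d"
    and qmin: "\<And>d. prob_vec d \<Longrightarrow> G q \<le> G d"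
  shows "p = q"
proof (rule ccontr)
  assume ne: "p \<noteq> q"
  define m where "m = (\<lambda>u. (1/2) * p u + (1 - 1/2) * q u)"
  have mp: "prob_vec m" using p q unfolding prob_vec_def m_def
    by (auto simp: sum.distrib simp flip: sum_divide_distrib)
  have nu_lt: "nu m < (1/2) * nu p + (1 - 1/2) * nu q"
  proof -
    have "0 < (1/2::real)" "(1/2::real) < 1" by auto
    then show ?thesis using nu_sc p q ne unfolding strictly_convex_on_simplex_def m_def by blast
  qed
  define a where "a = (\<lambda>k. - tau * (\<Sum>u\<in>UNIV. p u * Q k x u))"
  define b where "b = (\<lambda>k. - tau * (\<Sum>u\<in>UNIV. q u * Q k x u))"
  have ab: "\<And>k. - tau * (\<Sum>u\<in>UNIV. m u * Q k x u) = (a k + b k) / 2"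
    unfolding a_def b_def m_def by (simp add: algebra_simps sum.distrib sum_distrib_left sum_divide_distrib)
  have L: "ln (\<Sum>k\<in>I. w k * exp ((a k + b k)/2)) \<le> (ln (\<Sum>k\<in>I. w k * exp (a k)) + ln (\<Sum>k\<in>I. w k * exp (b k)))/2"
    by (rule lse_mid[OF fin wn pos])
  have "G m = (1/tau) * ln (\<Sum>k\<in>I. w k * exp ((a k + b k)/2)) + alpha * nu m"
    unfolding G_def ab[symmetric] by simp
  also have "\<dots> < (1/tau) * ((ln (\<Sum>k\<in>I. w k * exp (a k)) + ln (\<Sum>k\<in>I. w k * exp (b k)))/2)
       + alpha * ((1/2) * nu p + (1 - 1/2) * nu q)"
    apply (rule add_le_less_mono)
     apply (rule mult_left_mono[OF L]) using tau_pos apply simp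
    using nu_lt alpha_pos by simp
  also have "\<dots> = (G p + G q) / 2"
    unfolding G_def a_def b_def by (simp add: algebra_simps)
  finally have "G m < (G p + G q) / 2" .
  moreover have "G p \<le> G m" "G q \<le> G m" using pmin qmin mp by auto
  ultimately show False by simp
qed


theorem lemma1:
  fixes T K :: nat
    and f :: "nat \<Rightarrow> 'x::finite \<Rightarrow> 'u::finite \<Rightarrow> ('x \<Rightarrow> real) \<Rightarrow> 'x \<Rightarrow> real"
    and r :: "nat \<Rightarrow> 'x \<Rightarrow> 'u \<Rightarrow> ('x \<Rightarrow> real) \<Rightarrow> real"
    and mu0 :: "nat \<Rightarrow> 'x \<Rightarrow> real"
    and w :: "nat \<Rightarrow> real"
    and mus :: "nat \<Rightarrow> nat \<Rightarrow> 'x \<Rightarrow> real"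
    and tau alpha :: real
    and nu :: "('u \<Rightarrow> real) \<Rightarrow> real"
    and pia pib :: "nat \<Rightarrow> 'x \<Rightarrow> 'u \<Rightarrow> real"
    and t :: nat
  assumes T_pos: "1 \<le> T"
    and f_prob: "\<And>s x u m. s < T \<Longrightarrow> prob_vec m \<Longrightarrow> prob_vec (f s x u m)"
    and r_bdd: "\<And>s. s < T \<Longrightarrow> \<exists>B. \<forall>x u m. \<bar>r s x u m\<bar> \<le> B"
    and mu0_inj: "inj_on mu0 {1..K}"
    and mu0_prob: "\<And>k. k \<in> {1..K} \<Longrightarrow> prob_vec (mu0 k)"
    and w_nonneg: "\<And>k. k \<in> {1..K} \<Longrightarrow> 0 \<le> w k"
    and w_sum: "(\<Sum>k\<in>{1..K}. w k) = 1"
    and tau_pos: "0 < tau"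
    and alpha_pos: "0 < alpha"
    and nu_sc: "strictly_convex_on_simplex nu"
    and flows: "\<And>k s. k \<in> {1..K} \<Longrightarrow> s \<le> T \<Longrightarrow> prob_vec (mus k s)"
    and flows_start: "\<And>k. k \<in> {1..K} \<Longrightarrow> mus k 0 = mu0 k"
    and pia_opt: "pia \<in> B_opt T f r K w mus tau alpha nu"
    and pib_opt: "pib \<in> B_opt T f r K w mus tau alpha nu"
    and t_lt: "t < T"
    and Q_eq: "\<And>x u k. k \<in> {1..K} \<Longrightarrow>
                 Qfun T f r pia (mus k) t x u = Qfun T f r pib (mus k) t x u"
  shows "(\<forall>x. pia t x = pib t x) \<and>
         (1 \<le> t \<longrightarrow> (\<forall>x u. \<forall>k\<in>{1..K}.
             Qfun T f r pia (mus k) (t - 1) x u = Qfun T f r pib (mus k) (t - 1) x u))"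
proof -
  have Kpos: "0 < (\<Sum>k\<in>{1..K}. w k)" using w_sum by simp
  have polA: "policy T pia" and polB: "policy T pib"
    using pia_opt pib_opt unfolding B_opt_def by auto
  have piaopt: "\<forall>t<T. \<forall>x. \<forall>d. decision_rule d \<longrightarrow>
          cost T f r K w mus tau alpha nu pia t x \<le> cost T f r K w mus tau alpha nu (pia(t := d)) t x"
    using pia_opt unfolding B_opt_def mem_Collect_eq by (rule conjunct2)
  have pibopt: "\<forall>t<T. \<forall>x. \<forall>d. decision_rule d \<longrightarrow>
          cost T f r K w mus tau alpha nu pib t x \<le> cost T f r K w mus tau alpha nu (pib(t := d)) t x"
    using pib_opt unfolding B_opt_def mem_Collect_eq by (rule conjunct2)
  have drA: "decision_rule (pia t)" using polA t_lt unfolding policy_def by auto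
  have drB: "decision_rule (pib t)" using polB t_lt unfolding policy_def by auto
  define Q where "Q = (\<lambda>k x u. Qfun T f r pia (mus k) t x u)"
  define G where "G = (\<lambda>x p. (1 / tau) * ln (\<Sum>k\<in>{1..K}. w k *
        exp (- tau * (\<Sum>u\<in>UNIV. p u * Q k x u))) + alpha * nu p)"
  have costA: "cost T f r K w mus tau alpha nu (pia(t := d)) t x = G x (d x)" for d x
  proof -
    have "\<And>k u. Qfun T f r (pia(t := d)) (mus k) t x u = Q k x u"
      unfolding Q_def by (rule Qfun_cong) simp
    then show ?thesis unfolding cost_def G_def by simp
  qed
  have costB: "cost T f r K w mus tau alpha nu (pib(t := d)) t x = G x (d x)" for d x
  proof -
    have "\<And>k u. k \<in> {1..K} \<Longrightarrow> Qfun T f r (pib(t := d)) (mus k) t x u = Q k x u"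
    proof -
      fix k u assume k: "k \<in> {1..K}"
      have "Qfun T f r (pib(t := d)) (mus k) t x u = Qfun T f r pib (mus k) t x u"
        by (rule Qfun_cong) simp
      also have "\<dots> = Q k x u" unfolding Q_def using Q_eq[OF k] by simp
      finally show "Qfun T f r (pib(t := d)) (mus k) t x u = Q k x u" .
    qed
    then have "(\<Sum>k\<in>{1..K}. w k * exp (- tau * (\<Sum>u\<in>UNIV. (pib(t := d)) t x u * Qfun T f r (pib(t := d)) (mus k) t x u)))
       = (\<Sum>k\<in>{1..K}. w k * exp (- tau * (\<Sum>u\<in>UNIV. d x u * Q k x u)))"
      by (intro sum.cong) simp_all
    then show ?thesis unfolding cost_def G_def by simp
  qed
  have part1: "\<forall>x. pia t x = pib t x"
  proof
    fix x
    have minA: "G x (pia t x) \<le> G x d" if "prob_vec d" for d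
    proof -
      have dr: "decision_rule ((pia t)(x := d))" using drA that unfolding decision_rule_def by auto
      have "cost T f r K w mus tau alpha nu pia t x \<le> cost T f r K w mus tau alpha nu (pia(t := (pia t)(x := d))) t x"
        using piaopt[rule_format, OF t_lt dr] .
      moreover have "cost T f r K w mus tau alpha nu pia t x = G x (pia t x)"
        using costA[of "pia t" x] by simp
      ultimately show ?thesis using costA[of "(pia t)(x := d)" x] by simp
    qed
    have minB: "G x (pib t x) \<le> G x d" if "prob_vec d" for d
    proof -
      have dr: "decision_rule ((pib t)(x := d))" using drB that unfolding decision_rule_def by auto
      have "cost T f r K w mus tau alpha nu pib t x \<le> cost T f r K w mus tau alpha nu (pib(t := (pib t)(x := d))) t x"
        using pibopt[rule_format, OF t_lt dr] .
      moreover have "cost T f r K w mus tau alpha nu pib t x = G x (pib t x)"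
        using costB[of "pib t" x] by simp
      ultimately show ?thesis using costB[of "(pib t)(x := d)" x] by simp
    qed
    show "pia t x = pib t x"
    proof -
      have Gx: "\<And>p. G x p = (1 / tau) * ln (\<Sum>k\<in>{1..K}. w k *
        exp (- tau * (\<Sum>u\<in>UNIV. p u * Q k x u))) + alpha * nu p" unfolding G_def by simp
      have pa: "prob_vec (pia t x)" using drA unfolding decision_rule_def by simp
      have pb: "prob_vec (pib t x)" using drB unfolding decision_rule_def by simp
      show ?thesis
        by (rule lemma1_core[where I="{1..K}" and G="G x" and Q=Q and x=x and p="pia t x" and q="pib t x", OF finite_atLeastAtMost w_nonneg Kpos tau_pos alpha_pos nu_sc Gx pa pb minA minB])
    qed
  qed
  have part2: "1 \<le> t \<longrightarrow> (\<forall>x u. \<forall>k\<in>{1..K}.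
             Qfun T f r pia (mus k) (t - 1) x u = Qfun T f r pib (mus k) (t - 1) x u)"
  proof (intro impI allI ballI)
    fix x u k assume t1: "1 \<le> t" and k: "k \<in> {1..K}"
    then obtain s where ts: "t = Suc s" by (cases t) auto
    have nT: "\<not> T \<le> s + 1" using t_lt ts by simp
    have eqp: "pia (Suc s) = pib (Suc s)" using part1 ts by auto
    have eqQ: "\<And>x' u'. Qfun T f r pia (mus k) (Suc s) x' u' = Qfun T f r pib (mus k) (Suc s) x' u'"
      using Q_eq[OF k] ts by simp
    show "Qfun T f r pia (mus k) (t - 1) x u = Qfun T f r pib (mus k) (t - 1) x u"
    proof -
      have tm: "t - 1 = s" using ts by simp
      have nT': "\<not> T \<le> s + 1" by (rule nT)
      show ?thesis
        unfolding tm Qfun.simps[of T f r pia "mus k" s x u] Qfun.simps[of T f r pib "mus k" s x u]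
        unfolding if_not_P[OF nT'] Suc_eq_plus1[symmetric] eqp eqQ ..
    qed
  qed
  show ?thesis using part1 part2 by blast
qed

end
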